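(* Every compact metric space, viewed as a structure in the metric signature, has Scott rank at most $\omega$.
   Context: A metric space $(X,d)$ is viewed as a first-order structure in the signature $\{R_q : q\in\mathbb{Q}^+\}$ of binary relation symbols, where $R_q(x,y)$ holds iff $d(x,y)<q$. For a structure $M$ and finite tuples $\bar a,\bar b$ of the same length from $M$, define $\bar a\equiv_\alpha\bar b$ by induction on ordinals $\alpha$: $\bar a\equiv_0\bar b$ iff $\bar a,\bar b$ have the same quantifier-free type; for limit $\alpha$, $\bar a\equiv_\alpha\bar b$ iff $\bar a\equiv_\beta\bar b$ for all $\beta<\alpha$; $\bar a\equiv_{\alpha+1}\bar b$ iff for every $x\in M$ there is $y\in M$ with $\bar a x\equiv_\alpha\bar b y$, and for every $y\in M$ there is $x\in M$ with $\bar a x\equiv_\alpha \bar b y$. The Scott rank of $M$ is the least ordinal $\alpha$ such that for all finite tuples $\bar a,\bar b$ from $M$, $\bar a\equiv_\alpha\bar b$ implies $\bar a\equiv_{\alpha+1}\bar b$. *)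

theory Defs
  imports "HOL-Analysis.Analysis"
begin

text \<open>A metric space (M,d) as a structure in the signature of binary relation symbols
  R_q (q a positive rational), R_q(x,y) iff d(x,y) < q (plus equality).
  Finite tuples are lists of elements of M.\<close>

definition qf_equiv :: "('a \<Rightarrow> 'a \<Rightarrow> real) \<Rightarrow> 'a list \<Rightarrow> 'a list \<Rightarrow> bool" where
  "qf_equiv d as bs \<longleftrightarrow> length as = length bs \<and>
     (\<forall>i < length as. \<forall>j < length as.
        (as ! i = as ! j \<longleftrightarrow> bs ! i = bs ! j) \<and>
        (\<forall>q::rat. q > 0 \<longrightarrow> (d (as ! i) (as ! j) < of_rat q \<longleftrightarrow> d (bs ! i) (bs ! j) < of_rat q)))"

fun bf_equiv :: "'a set \<Rightarrow> ('a \<Rightarrow> 'a \<Rightarrow> real) \<Rightarrow> nat \<Rightarrow> 'a list \<Rightarrow> 'a list \<Rightarrow> bool" where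
  "bf_equiv M d 0 as bs = qf_equiv d as bs"
| "bf_equiv M d (Suc n) as bs =
     ((\<forall>x\<in>M. \<exists>y\<in>M. bf_equiv M d n (as @ [x]) (bs @ [y])) \<and>
      (\<forall>y\<in>M. \<exists>x\<in>M. bf_equiv M d n (as @ [x]) (bs @ [y])))"

definition bf_equiv_omega :: "'a set \<Rightarrow> ('a \<Rightarrow> 'a \<Rightarrow> real) \<Rightarrow> 'a list \<Rightarrow> 'a list \<Rightarrow> bool" where
  "bf_equiv_omega M d as bs \<longleftrightarrow> (\<forall>n. bf_equiv M d n as bs)"

definition bf_equiv_omega_plus1 :: "'a set \<Rightarrow> ('a \<Rightarrow> 'a \<Rightarrow> real) \<Rightarrow> 'a list \<Rightarrow> 'a list \<Rightarrow> bool" where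
  "bf_equiv_omega_plus1 M d as bs \<longleftrightarrow>
     (\<forall>x\<in>M. \<exists>y\<in>M. bf_equiv_omega M d (as @ [x]) (bs @ [y])) \<and>
     (\<forall>y\<in>M. \<exists>x\<in>M. bf_equiv_omega M d (as @ [x]) (bs @ [y]))"

text \<open>Scott rank at most \<omega>: the least ordinal \<alpha> with (\<equiv>_\<alpha> implies \<equiv>_{\<alpha>+1} for all tuples)
  is \<le> \<omega>, i.e. some \<alpha> \<in> {0,1,2,...} \<union> {\<omega>} has this property.\<close>
definition scott_rank_le_omega :: "'a set \<Rightarrow> ('a \<Rightarrow> 'a \<Rightarrow> real) \<Rightarrow> bool" where
  "scott_rank_le_omega M d \<longleftrightarrow>
     (\<exists>n::nat. \<forall>as bs. set as \<subseteq> M \<longrightarrow> set bs \<subseteq> M \<longrightarrow>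
        bf_equiv M d n as bs \<longrightarrow> bf_equiv M d (Suc n) as bs) \<or>
     (\<forall>as bs. set as \<subseteq> M \<longrightarrow> set bs \<subseteq> M \<longrightarrow>
        bf_equiv_omega M d as bs \<longrightarrow> bf_equiv_omega_plus1 M d as bs)"

end

theory Submission
  imports Defs
begin

definition cv :: "('a \<Rightarrow> 'a \<Rightarrow> real) \<Rightarrow> (nat \<Rightarrow> 'a) \<Rightarrow> 'a \<Rightarrow> bool" where
  "cv d f l \<longleftrightarrow> (\<forall>e>0. \<exists>N. \<forall>k\<ge>N. d (f k) l < e)"

definition lconv :: "('a \<Rightarrow> 'a \<Rightarrow> real) \<Rightarrow> (nat \<Rightarrow> 'a list) \<Rightarrow> 'a list \<Rightarrow> bool" where
  "lconv d F L \<longleftrightarrow> (\<forall>k. length (F k) = length L) \<and> (\<forall>i<length L. cv d (\<lambda>k. F k ! i) (L ! i))"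

lemma cv_sub: "cv d f l \<Longrightarrow> strict_mono r \<Longrightarrow> cv d (\<lambda>k. f (r k)) l"
  unfolding cv_def by (meson order.trans seq_suble)

lemma cv_shift: "cv d f l \<Longrightarrow> cv d (\<lambda>k. f (k + m)) l"
  unfolding cv_def by (meson le_add1 order.trans)

context Metric_space
begin

lemma cv_const: "l \<in> M \<Longrightarrow> cv d (\<lambda>k. l) l"
  unfolding cv_def by auto

lemma real_eq_rat: 
  fixes r s :: real
  assumes "\<forall>q::rat. q > 0 \<longrightarrow> (r < of_rat q \<longleftrightarrow> s < of_rat q)" "r \<ge> 0" "s \<ge> 0"
  shows "r = s"
proof (rule ccontr)
  assume "r \<noteq> s"
  then consider "r < s" | "s < r" by linarith
  then show False
  proof cases
    case 1
    then obtain q where "r < of_rat q" "of_rat q < s" using of_rat_dense by blast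
    moreover have "q > 0" using \<open>r < of_rat q\<close> \<open>r \<ge> 0\<close> by (metis of_rat_less_0_iff not_less_iff_gr_or_eq of_rat_eq_0_iff less_le_trans le_less_linear zero_less_of_rat_iff)
    ultimately show False using assms(1) by auto
  next
    case 2
    then obtain q where "s < of_rat q" "of_rat q < r" using of_rat_dense by blast
    moreover have "q > 0" using \<open>s < of_rat q\<close> \<open>s \<ge> 0\<close> by (metis of_rat_less_0_iff not_less_iff_gr_or_eq of_rat_eq_0_iff less_le_trans le_less_linear zero_less_of_rat_iff)
    ultimately show False using assms(1) by auto
  qed
qed

lemma qf_dist:
  assumes "set as \<subseteq> M" "set bs \<subseteq> M"
  shows "qf_equiv d as bs \<longleftrightarrow> length as = length bs \<and>
     (\<forall>i<length as. \<forall>j<length as. d (as!i) (as!j) = d (bs!i) (bs!j))"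
proof
  assume h: "qf_equiv d as bs"
  show "length as = length bs \<and> (\<forall>i<length as. \<forall>j<length as. d (as!i) (as!j) = d (bs!i) (bs!j))"
  proof (intro conjI allI impI)
    show "length as = length bs" using h unfolding qf_equiv_def by auto
    fix i j assume "i < length as" "j < length as"
    then show "d (as!i) (as!j) = d (bs!i) (bs!j)"
      using h \<open>length as = length bs\<close> assms unfolding qf_equiv_def
      by (intro real_eq_rat) (auto intro!: nonneg)
  qed
next
  assume h: "length as = length bs \<and> (\<forall>i<length as. \<forall>j<length as. d (as!i) (as!j) = d (bs!i) (bs!j))"
  show "qf_equiv d as bs" unfolding qf_equiv_def
  proof (intro conjI allI impI)
    show "length as = length bs" using h by auto
    fix i j and q :: rat assume ij: "i < length as" "j < length as"
    then have "as!i \<in> M" "as!j \<in> M" "bs!i \<in> M" "bs!j \<in> M" using assms h by (auto dest: nth_mem)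
    then show "(as ! i = as ! j) = (bs ! i = bs ! j)" using h ij by (metis zero)
    show "0 < q \<Longrightarrow> (d (as ! i) (as ! j) < real_of_rat q) = (d (bs ! i) (bs ! j) < real_of_rat q)"
      using h ij by auto
  qed
qed

lemma dist_close:
  assumes "a \<in> M" "b \<in> M" "x \<in> M" "y \<in> M"
  shows "\<bar>d a b - d x y\<bar> \<le> d x a + d y b"
proof -
  have "d a b \<le> d a x + d x y + d y b" using triangle assms by (smt (verit))
  moreover have "d x y \<le> d x a + d a b + d b y" using triangle assms by (smt (verit))
  ultimately show ?thesis using commute assms by (smt (verit))
qed

lemma lim_dist:
  assumes "cv d f a" "cv d g b" "cv d f' a'" "cv d g' b'" "\<And>k. d (f k) (g k) = d (f' k) (g' k)"
    "a \<in> M" "b \<in> M" "a' \<in> M" "b' \<in> M"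
    "\<And>k. f k \<in> M" "\<And>k. g k \<in> M" "\<And>k. f' k \<in> M" "\<And>k. g' k \<in> M"
  shows "d a b = d a' b'"
proof (rule ccontr)
  assume "d a b \<noteq> d a' b'"
  define e where "e = \<bar>d a b - d a' b'\<bar> / 5"
  have e: "e > 0" using \<open>d a b \<noteq> d a' b'\<close> unfolding e_def by auto
  obtain N1 where N1: "\<forall>k\<ge>N1. d (f k) a < e" using assms(1) e unfolding cv_def by blast
  obtain N2 where N2: "\<forall>k\<ge>N2. d (g k) b < e" using assms(2) e unfolding cv_def by blast
  obtain N3 where N3: "\<forall>k\<ge>N3. d (f' k) a' < e" using assms(3) e unfolding cv_def by blast
  obtain N4 where N4: "\<forall>k\<ge>N4. d (g' k) b' < e" using assms(4) e unfolding cv_def by blast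
  define k where "k = max (max N1 N2) (max N3 N4)"
  have 1: "d (f k) a < e" "d (g k) b < e" "d (f' k) a' < e" "d (g' k) b' < e" using N1 N2 N3 N4 k_def by auto
  have "\<bar>d a b - d (f k) (g k)\<bar> \<le> d (f k) a + d (g k) b" by (rule dist_close) (use assms in auto)
  moreover have "\<bar>d a' b' - d (f' k) (g' k)\<bar> \<le> d (f' k) a' + d (g' k) b'" by (rule dist_close) (use assms in auto)
  ultimately have "\<bar>d a b - d a' b'\<bar> < 4 * e" using 1 assms(5)[of k] by linarith
  then show False unfolding e_def using e by auto
qed

lemma compact_seq:
  assumes "compact_space mtopology" "\<And>k::nat. f k \<in> M"
  obtains r l where "strict_mono r" "l \<in> M" "cv d (\<lambda>k. f (r k)) l"
proof -
  have "range f \<subseteq> M" using assms by auto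
  moreover have A: "\<forall>\<sigma>::nat \<Rightarrow> _. range \<sigma> \<subseteq> M
         \<longrightarrow> (\<exists>l r. l \<in> M \<and> strict_mono r \<and> limitin mtopology (\<sigma> \<circ> r) l sequentially)"
    using assms(1) compact_space_sequentially by simp
  have "\<exists>l r. l \<in> M \<and> strict_mono r \<and> limitin mtopology (f \<circ> r) l sequentially"
    using A[rule_format, OF \<open>range f \<subseteq> M\<close>] .
  then obtain l r where L: "l \<in> M" "strict_mono r" "limitin mtopology (f \<circ> r) l sequentially"
    by blast
  moreover have "cv d (\<lambda>k. f (r k)) l"
    unfolding cv_def
  proof (intro allI impI)
    fix e :: real assume "e > 0"
    then obtain N where "\<forall>n\<ge>N. (f \<circ> r) n \<in> M \<and> d ((f \<circ> r) n) l < e"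
      using L(3) unfolding limitin_metric eventually_sequentially by blast
    then show "\<exists>N. \<forall>k\<ge>N. d (f (r k)) l < e" by auto
  qed
  ultimately show ?thesis using that by blast
qed

lemma qf_base_closed:
  assumes "set as \<subseteq> M" "set bs \<subseteq> M" "\<And>k. set (F k) \<subseteq> M" "\<And>k. set (G k) \<subseteq> M"
    "lconv d F as" "lconv d G bs" "\<And>k. qf_equiv d (F k) (G k)"
  shows "qf_equiv d as bs"
proof -
  have lF: "\<And>k. length (F k) = length as" and lG: "\<And>k. length (G k) = length bs"
    using assms(5,6) unfolding lconv_def by auto
  have q: "\<And>k. length (F k) = length (G k) \<and> (\<forall>i<length (F k). \<forall>j<length (F k). d (F k!i) (F k!j) = d (G k!i) (G k!j))"
    using qf_dist assms(3,4,7) by blast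
  have len: "length as = length bs" using q[of 0] lF lG by auto
  show ?thesis unfolding qf_dist[OF assms(1,2)]
  proof (intro conjI allI impI len)
    fix i j assume ij: "i < length as" "j < length as"
    show "d (as!i) (as!j) = d (bs!i) (bs!j)"
    proof (rule lim_dist)
      show "cv d (\<lambda>k. F k ! i) (as ! i)" "cv d (\<lambda>k. F k ! j) (as ! j)"
        using assms(5) ij unfolding lconv_def by auto
      show "cv d (\<lambda>k. G k ! i) (bs ! i)" "cv d (\<lambda>k. G k ! j) (bs ! j)"
        using assms(6) ij len unfolding lconv_def by auto
      show "as ! i \<in> M" "as ! j \<in> M" using assms(1) ij by auto
      show "\<And>k. F k ! i \<in> M" "\<And>k. F k ! j \<in> M" using assms(3) ij lF by (metis nth_mem subsetD)+
      show "bs ! i \<in> M" "bs ! j \<in> M" using assms(2) ij len by auto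
      show "\<And>k. G k ! i \<in> M" "\<And>k. G k ! j \<in> M" using assms(4) ij lG len by (metis nth_mem subsetD)+
      show "\<And>k. d (F k ! i) (F k ! j) = d (G k ! i) (G k ! j)" using q ij lF by metis
    qed
  qed
qed

lemma qf_snoc: "qf_equiv d (as @ [x]) (bs @ [y]) \<Longrightarrow> qf_equiv d as bs"
  unfolding qf_equiv_def
proof (intro conjI allI impI)
  assume h: "length (as @ [x]) = length (bs @ [y]) \<and> (\<forall>i<length (as @ [x]). \<forall>j<length (as @ [x]).
        ((as @ [x]) ! i = (as @ [x]) ! j) = ((bs @ [y]) ! i = (bs @ [y]) ! j) \<and>
        (\<forall>q>0. (d ((as @ [x]) ! i) ((as @ [x]) ! j) < real_of_rat q) = (d ((bs @ [y]) ! i) ((bs @ [y]) ! j) < real_of_rat q)))"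
  then show "length as = length bs" by simp
  fix i j assume ij: "i < length as" "j < length as"
  have l: "length as = length bs" using h by simp
  show "(as ! i = as ! j) = (bs ! i = bs ! j)" using h[THEN conjunct2, rule_format, of i j] ij l by (simp add: nth_append)
  fix q :: rat assume "q > 0"
  then show "(d (as ! i) (as ! j) < real_of_rat q) = (d (bs ! i) (bs ! j) < real_of_rat q)"
    using h[THEN conjunct2, rule_format, of i j] ij l by (simp add: nth_append)
qed

lemma bf_mono: "set as \<subseteq> M \<Longrightarrow> set bs \<subseteq> M \<Longrightarrow> bf_equiv M d (Suc n) as bs \<Longrightarrow> bf_equiv M d n as bs"
proof (induction n arbitrary: as bs)
  case 0
  show ?case
  proof (cases "M = {}")
    case True
    then have "as = []" "bs = []" using 0 by auto
    then show ?thesis by (simp add: qf_equiv_def)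
  next
    case False
    then obtain x where "x \<in> M" by auto
    then obtain y where "qf_equiv d (as @ [x]) (bs @ [y])" using 0 by auto
    then show ?thesis using qf_snoc by auto
  qed
next
  case (Suc n)
  show ?case unfolding bf_equiv.simps
  proof (intro conjI ballI)
    fix x assume "x \<in> M"
    then obtain y where "y \<in> M" "bf_equiv M d (Suc n) (as @ [x]) (bs @ [y])" using Suc.prems by auto
    then show "\<exists>y\<in>M. bf_equiv M d n (as @ [x]) (bs @ [y])" using Suc.IH[of "as @ [x]" "bs @ [y]"] Suc.prems \<open>x \<in> M\<close> by auto
  next
    fix y assume "y \<in> M"
    then obtain x where "x \<in> M" "bf_equiv M d (Suc n) (as @ [x]) (bs @ [y])" using Suc.prems by auto
    then show "\<exists>x\<in>M. bf_equiv M d n (as @ [x]) (bs @ [y])" using Suc.IH[of "as @ [x]" "bs @ [y]"] Suc.prems \<open>y \<in> M\<close> by auto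
  qed
qed

lemma bf_mono_le: "set as \<subseteq> M \<Longrightarrow> set bs \<subseteq> M \<Longrightarrow> m \<le> n \<Longrightarrow> bf_equiv M d n as bs \<Longrightarrow> bf_equiv M d m as bs"
proof (induction n)
  case 0 then show ?case by simp
next
  case (Suc n) then show ?case using bf_mono by (metis le_Suc_eq)
qed

lemma lconv_sub: "lconv d F L \<Longrightarrow> strict_mono r \<Longrightarrow> lconv d (\<lambda>k. F (r k)) L"
  unfolding lconv_def using cv_sub[of d _ _ r] by auto

lemma lconv_snoc: "lconv d F L \<Longrightarrow> cv d f x \<Longrightarrow> lconv d (\<lambda>k. F k @ [f k]) (L @ [x])"
  unfolding lconv_def
proof (intro conjI allI impI)
  assume h: "(\<forall>k. length (F k) = length L) \<and> (\<forall>i<length L. cv d (\<lambda>k. F k ! i) (L ! i))" "cv d f x"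
  then show "\<And>k. length (F k @ [f k]) = length (L @ [x])" by simp
  fix i assume "i < length (L @ [x])"
  then consider "i < length L" | "i = length L" by fastforce
  then show "cv d (\<lambda>k. (F k @ [f k]) ! i) ((L @ [x]) ! i)"
  proof cases
    case 1 then show ?thesis using h by (simp add: nth_append)
  next
    case 2 then show ?thesis using h by (simp add: nth_append)
  qed
qed

lemma bf_closed:
  assumes "compact_space mtopology"
  shows "set as \<subseteq> M \<Longrightarrow> set bs \<subseteq> M \<Longrightarrow> (\<And>k. set (F k) \<subseteq> M) \<Longrightarrow> (\<And>k. set (G k) \<subseteq> M) \<Longrightarrow>
    lconv d F as \<Longrightarrow> lconv d G bs \<Longrightarrow> (\<And>k. bf_equiv M d n (F k) (G k)) \<Longrightarrow> bf_equiv M d n as bs"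
proof (induction n arbitrary: as bs F G)
  case 0
  show ?case unfolding bf_equiv.simps by (rule qf_base_closed[of as bs F G]) (use 0 in auto)
next
  case (Suc n)
  show ?case unfolding bf_equiv.simps
  proof (intro conjI ballI)
    fix x assume x: "x \<in> M"
    have "\<forall>k. \<exists>y. y \<in> M \<and> bf_equiv M d n (F k @ [x]) (G k @ [y])" using Suc.prems(7) x by (simp only: bf_equiv.simps) blast
    from choice[OF this] obtain y where y0: "\<forall>k. y k \<in> M \<and> bf_equiv M d n (F k @ [x]) (G k @ [y k])" by blast
    have y: "\<And>k. y k \<in> M" "\<And>k. bf_equiv M d n (F k @ [x]) (G k @ [y k])" using y0 by auto
    obtain r l where r: "strict_mono r" "l \<in> M" "cv d (\<lambda>k. y (r k)) l" by (rule compact_seq[OF assms y(1)])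
    have "bf_equiv M d n (as @ [x]) (bs @ [l])"
    proof (rule Suc.IH[of _ _ "\<lambda>k. F (r k) @ [x]" "\<lambda>k. G (r k) @ [y (r k)]"])
      show "set (as @ [x]) \<subseteq> M" "set (bs @ [l]) \<subseteq> M" using Suc.prems x r by auto
      show "\<And>k. set (F (r k) @ [x]) \<subseteq> M" "\<And>k. set (G (r k) @ [y (r k)]) \<subseteq> M" using Suc.prems x y by auto
      show "lconv d (\<lambda>k. F (r k) @ [x]) (as @ [x])"
        using lconv_snoc[OF lconv_sub[OF Suc.prems(5) r(1)] cv_const[OF x]] .
      show "lconv d (\<lambda>k. G (r k) @ [y (r k)]) (bs @ [l])"
        using lconv_snoc[OF lconv_sub[OF Suc.prems(6) r(1)] r(3)] .
      show "\<And>k. bf_equiv M d n (F (r k) @ [x]) (G (r k) @ [y (r k)])" using y by auto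
    qed
    then show "\<exists>y\<in>M. bf_equiv M d n (as @ [x]) (bs @ [y])" using r by auto
  next
    fix x assume x: "x \<in> M"
    have "\<forall>k. \<exists>y. y \<in> M \<and> bf_equiv M d n (F k @ [y]) (G k @ [x])" using Suc.prems(7) x by (simp only: bf_equiv.simps) blast
    from choice[OF this] obtain y where y0: "\<forall>k. y k \<in> M \<and> bf_equiv M d n (F k @ [y k]) (G k @ [x])" by blast
    have y: "\<And>k. y k \<in> M" "\<And>k. bf_equiv M d n (F k @ [y k]) (G k @ [x])" using y0 by auto
    obtain r l where r: "strict_mono r" "l \<in> M" "cv d (\<lambda>k. y (r k)) l" by (rule compact_seq[OF assms y(1)])
    have "bf_equiv M d n (as @ [l]) (bs @ [x])"
    proof (rule Suc.IH[of _ _ "\<lambda>k. F (r k) @ [y (r k)]" "\<lambda>k. G (r k) @ [x]"])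
      show "set (as @ [l]) \<subseteq> M" "set (bs @ [x]) \<subseteq> M" using Suc.prems x r by auto
      show "\<And>k. set (F (r k) @ [y (r k)]) \<subseteq> M" "\<And>k. set (G (r k) @ [x]) \<subseteq> M" using Suc.prems x y by auto
      show "lconv d (\<lambda>k. G (r k) @ [x]) (bs @ [x])"
        using lconv_snoc[OF lconv_sub[OF Suc.prems(6) r(1)] cv_const[OF x]] .
      show "lconv d (\<lambda>k. F (r k) @ [y (r k)]) (as @ [l])"
        using lconv_snoc[OF lconv_sub[OF Suc.prems(5) r(1)] r(3)] .
      show "\<And>k. bf_equiv M d n (F (r k) @ [y (r k)]) (G (r k) @ [x])" using y by auto
    qed
    then show "\<exists>y\<in>M. bf_equiv M d n (as @ [y]) (bs @ [x])" using r by auto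
  qed
qed

lemma lconv_const: "set L \<subseteq> M \<Longrightarrow> lconv d (\<lambda>k. L) L"
  unfolding lconv_def by (metis cv_const nth_mem subsetD)

lemma omega_step:
  assumes "compact_space mtopology" "set as \<subseteq> M" "set bs \<subseteq> M" "bf_equiv_omega M d as bs"
  shows "bf_equiv_omega_plus1 M d as bs"
  unfolding bf_equiv_omega_plus1_def
proof (intro conjI ballI)
  fix x assume x: "x \<in> M"
  have "\<forall>k. \<exists>y. y \<in> M \<and> bf_equiv M d k (as @ [x]) (bs @ [y])"
    using assms(4) x unfolding bf_equiv_omega_def by (metis bf_equiv.simps(2))
  from choice[OF this] obtain y where y0: "\<forall>k. y k \<in> M \<and> bf_equiv M d k (as @ [x]) (bs @ [y k])" by blast
    have y: "\<And>k. y k \<in> M" "\<And>k. bf_equiv M d k (as @ [x]) (bs @ [y k])" using y0 by auto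
  obtain r l where r: "strict_mono r" "l \<in> M" "cv d (\<lambda>k. y (r k)) l" by (rule compact_seq[OF assms(1) y(1)])
  have "bf_equiv M d m (as @ [x]) (bs @ [l])" for m
  proof (rule bf_closed[OF assms(1), of _ _ "\<lambda>k. as @ [x]" "\<lambda>k. bs @ [y (r (k + m))]"])
    show "set (as @ [x]) \<subseteq> M" "set (bs @ [l]) \<subseteq> M" using assms x r by auto
    show "\<And>k. set (as @ [x]) \<subseteq> M" "\<And>k. set (bs @ [y (r (k + m))]) \<subseteq> M" using assms x y by auto
    show "lconv d (\<lambda>k. as @ [x]) (as @ [x])" using lconv_const assms x by auto
    show "lconv d (\<lambda>k. bs @ [y (r (k + m))]) (bs @ [l])"
      using lconv_snoc[OF lconv_const[OF assms(3)] cv_shift[OF r(3), of m]] .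
    fix k
    have "m \<le> r (k + m)" using seq_suble[OF r(1), of "k+m"] by linarith
    then show "bf_equiv M d m (as @ [x]) (bs @ [y (r (k + m))])"
      using bf_mono_le[of "as @ [x]" "bs @ [y (r (k + m))]" m "r (k+m)"] y assms x by auto
  qed
  then show "\<exists>y\<in>M. bf_equiv_omega M d (as @ [x]) (bs @ [y])" using r unfolding bf_equiv_omega_def by auto
next
  fix x assume x: "x \<in> M"
  have "\<forall>k. \<exists>y. y \<in> M \<and> bf_equiv M d k (as @ [y]) (bs @ [x])"
    using assms(4) x unfolding bf_equiv_omega_def by (metis bf_equiv.simps(2))
  from choice[OF this] obtain y where y0: "\<forall>k. y k \<in> M \<and> bf_equiv M d k (as @ [y k]) (bs @ [x])" by blast
    have y: "\<And>k. y k \<in> M" "\<And>k. bf_equiv M d k (as @ [y k]) (bs @ [x])" using y0 by auto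
  obtain r l where r: "strict_mono r" "l \<in> M" "cv d (\<lambda>k. y (r k)) l" by (rule compact_seq[OF assms(1) y(1)])
  have "bf_equiv M d m (as @ [l]) (bs @ [x])" for m
  proof (rule bf_closed[OF assms(1), of _ _ "\<lambda>k. as @ [y (r (k + m))]" "\<lambda>k. bs @ [x]"])
    show "set (as @ [l]) \<subseteq> M" "set (bs @ [x]) \<subseteq> M" using assms x r by auto
    show "\<And>k. set (bs @ [x]) \<subseteq> M" "\<And>k. set (as @ [y (r (k + m))]) \<subseteq> M" using assms x y by auto
    show "lconv d (\<lambda>k. bs @ [x]) (bs @ [x])" using lconv_const assms x by auto
    show "lconv d (\<lambda>k. as @ [y (r (k + m))]) (as @ [l])"
      using lconv_snoc[OF lconv_const[OF assms(2)] cv_shift[OF r(3), of m]] .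
    fix k
    have "m \<le> r (k + m)" using seq_suble[OF r(1), of "k+m"] by linarith
    then show "bf_equiv M d m (as @ [y (r (k + m))]) (bs @ [x])"
      using bf_mono_le[of "as @ [y (r (k + m))]" "bs @ [x]" m "r (k+m)"] y assms x by auto
  qed
  then show "\<exists>y\<in>M. bf_equiv_omega M d (as @ [y]) (bs @ [x])" using r unfolding bf_equiv_omega_def by auto
qed

end

theorem mainTheorem6:
  fixes M :: "'a set" and d :: "'a \<Rightarrow> 'a \<Rightarrow> real"
  assumes "Metric_space M d"
    and "compact_space (Metric_space.mtopology M d)"
  shows "scott_rank_le_omega M d"
  unfolding scott_rank_le_omega_def
  using Metric_space.omega_step[OF assms(1) assms(2)] by blast

end
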